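(* Let $I$ be a finite nonempty set and let $[R],[S]\in Q(I)$ be complementary equivalence relations, represented by surjections $\pi_R:I\twoheadrightarrow R$ and $\pi_S:I\twoheadrightarrow S$. Then the map $k[R]\otimes_{k[*]}k[S]\to k[I]$, $p\otimes q\mapsto \varphi_{\pi_R}(p)\varphi_{\pi_S}(q)$, is well defined and is an isomorphism of $k[R]\otimes_k k[S]$-modules; it does not depend (up to the natural identifications) on the choice of representatives $R,S$.
   Context: $k$ is a field. For a finite set $J$, $k[J]$ denotes the polynomial algebra over $k$ in variables $\lambda_j$, $j\in J$; $k[*]=k[\lambda]$ for a one-point set. $Q(I)$ is the set of equivalence relations on $I$; a surjection $\pi_R:I\twoheadrightarrow R$ determines the relation $[R]$ whose classes are $I_r=\pi_R^{-1}(r)$. A surjection $\pi:I\twoheadrightarrow R$ induces the algebra map $\varphi_\pi:k[R]\to k[I]$, $\lambda_r\mapsto\sum_{i\in I_r}\lambda_i$; $k[*]\to k[R]$ is $\lambda\mapsto\sum_{r\in R}\lambda_r$ (and similarly for $S$), making $k[R]$, $k[S]$ into $k[*]$-modules. $[R]$ with $|R|$ classes and $[S]$ with $|S|$ classes, where $|R|+|S|=|I|+1$, are called complementary if the bipartite graph with vertex set $R\sqcup S$ and one edge joining $\pi_S(i)$ to $\pi_R(i)$ for each $i\in I$ is a connected tree. *)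

theory Defs
  imports Main "HOL-Library.Poly_Mapping" "HOL-Library.Cardinality"
begin

text \<open>Polynomial algebra k[V] in variables indexed by the (finite) type 'v:
  finitely supported maps from monomials (exponent vectors) to coefficients.\<close>
type_synonym ('v, 'k) mpoly = "('v \<Rightarrow>\<^sub>0 nat) \<Rightarrow>\<^sub>0 'k"

definition Var :: "'v \<Rightarrow> ('v, 'k::zero_neq_one) mpoly" where
  "Var v = Poly_Mapping.single (Poly_Mapping.single v 1) 1"

definition subst :: "('v \<Rightarrow> ('w, 'k::comm_ring_1) mpoly) \<Rightarrow> ('v, 'k) mpoly \<Rightarrow> ('w, 'k) mpoly" where
  "subst f p = (\<Sum>(mo::'v \<Rightarrow>\<^sub>0 nat)\<in>Poly_Mapping.keys p. Poly_Mapping.single 0 (Poly_Mapping.lookup p mo) * (\<Prod>x\<in>Poly_Mapping.keys mo. f x ^ Poly_Mapping.lookup mo (x::'v)))"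

definition phi :: "('i::finite \<Rightarrow> 'r) \<Rightarrow> ('r, 'k::comm_ring_1) mpoly \<Rightarrow> ('i, 'k) mpoly" where
  "phi \<pi> = subst (\<lambda>r. \<Sum>i\<in>{i. \<pi> i = r}. Var i)"

definition rename :: "('v \<Rightarrow> 'w) \<Rightarrow> ('v, 'k::comm_ring_1) mpoly \<Rightarrow> ('w, 'k) mpoly" where
  "rename f = subst (\<lambda>v. Var (f v))"

text \<open>k[R] (x)_k k[S] is identified with k[R + S] via p (x) q |-> rename Inl p * rename Inr q.
  The k[*]-tensor product k[R] (x)_{k[*]} k[S] is the quotient of it by the ideal generated by
  lambda (x) 1 - 1 (x) lambda, i.e. by the element below.\<close>
definition tensor_rel :: "('r::finite + 's::finite, 'k::comm_ring_1) mpoly" where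
  "tensor_rel = (\<Sum>r\<in>UNIV. Var (Inl r)) - (\<Sum>s\<in>UNIV. Var (Inr s))"

definition tensor_map :: "('i::finite \<Rightarrow> 'r) \<Rightarrow> ('i \<Rightarrow> 's) \<Rightarrow> ('r + 's, 'k::comm_ring_1) mpoly \<Rightarrow> ('i, 'k) mpoly" where
  "tensor_map \<pi>R \<pi>S = subst (case_sum (\<lambda>r. \<Sum>i\<in>{i. \<pi>R i = r}. Var i) (\<lambda>s. \<Sum>i\<in>{i. \<pi>S i = s}. Var i))"

text \<open>Bipartite multigraph on R + S with one edge {pi_S i, pi_R i} for each i in I.\<close>
definition bip_adj :: "('i \<Rightarrow> 'r) \<Rightarrow> ('i \<Rightarrow> 's) \<Rightarrow> 'r + 's \<Rightarrow> 'r + 's \<Rightarrow> bool" where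
  "bip_adj \<pi>R \<pi>S x y \<longleftrightarrow> (\<exists>i. (x = Inr (\<pi>S i) \<and> y = Inl (\<pi>R i)) \<or> (x = Inl (\<pi>R i) \<and> y = Inr (\<pi>S i)))"

text \<open>A (multi)graph with vertex set R + S and edge set indexed by I is a tree iff it is
  connected and #edges + 1 = #vertices.\<close>
definition bip_is_tree :: "('i::finite \<Rightarrow> 'r::finite) \<Rightarrow> ('i \<Rightarrow> 's::finite) \<Rightarrow> bool" where
  "bip_is_tree \<pi>R \<pi>S \<longleftrightarrow> (\<forall>x y. (bip_adj \<pi>R \<pi>S)\<^sup>*\<^sup>* x y) \<and> CARD('i) + 1 = CARD('r + 's)"

definition complementary :: "('i::finite \<Rightarrow> 'r::finite) \<Rightarrow> ('i \<Rightarrow> 's::finite) \<Rightarrow> bool" where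
  "complementary \<pi>R \<pi>S \<longleftrightarrow> CARD('r) + CARD('s) = CARD('i) + 1 \<and> bip_is_tree \<pi>R \<pi>S"

end

theory Submission
  imports Defs "HOL-Library.Function_Algebras" "HOL.Vector_Spaces"
begin

abbreviation CC :: "'k::comm_ring_1 \<Rightarrow> ('v, 'k) mpoly" where
  "CC c \<equiv> Poly_Mapping.single 0 c"

definition EE :: "('v \<Rightarrow> ('w, 'k::comm_ring_1) mpoly) \<Rightarrow> ('v \<Rightarrow>\<^sub>0 nat) \<Rightarrow> ('w, 'k) mpoly" where
  "EE f mo = (\<Prod>x\<in>Poly_Mapping.keys mo. f x ^ Poly_Mapping.lookup mo x)"

lemma EE_superset:
  assumes "finite A" "Poly_Mapping.keys mo \<subseteq> A"
  shows "EE f mo = (\<Prod>x\<in>A. f x ^ Poly_Mapping.lookup mo x)"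
  unfolding EE_def
  by (rule prod.mono_neutral_left) (use assms in \<open>auto simp: in_keys_iff\<close>)

lemma EE_add: "EE f (a + b) = EE f a * EE f b"
proof -
  let ?A = "Poly_Mapping.keys a \<union> Poly_Mapping.keys b"
  have "EE f (a + b) = (\<Prod>x\<in>?A. f x ^ Poly_Mapping.lookup (a+b) x)"
    by (rule EE_superset) (auto dest: subsetD[OF keys_add])
  also have "\<dots> = (\<Prod>x\<in>?A. f x ^ Poly_Mapping.lookup a x) * (\<Prod>x\<in>?A. f x ^ Poly_Mapping.lookup b x)"
    by (simp add: lookup_add power_add prod.distrib)
  also have "\<dots> = EE f a * EE f b"
    by (simp add: EE_superset[symmetric])
  finally show ?thesis .
qed

lemma EE_zero [simp]: "EE f 0 = 1"
  by (simp add: EE_def)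

lemma EE_single [simp]: "EE f (Poly_Mapping.single x n) = f x ^ n"
  by (cases "n = 0") (simp_all add: EE_def)

lemma subst_EE: "subst f p = (\<Sum>mo\<in>Poly_Mapping.keys p. CC (Poly_Mapping.lookup p mo) * EE f mo)"
  by (simp add: subst_def EE_def)

lemma subst_superset:
  assumes "finite A" "Poly_Mapping.keys p \<subseteq> A"
  shows "subst f p = (\<Sum>mo\<in>A. CC (Poly_Mapping.lookup p mo) * EE f mo)"
  unfolding subst_EE
  by (rule sum.mono_neutral_left) (use assms in \<open>auto simp: in_keys_iff\<close>)

lemma subst_add: "subst f (p + q) = subst f p + subst f q"
proof -
  let ?A = "Poly_Mapping.keys p \<union> Poly_Mapping.keys q"
  have "subst f (p + q) = (\<Sum>mo\<in>?A. CC (Poly_Mapping.lookup (p+q) mo) * EE f mo)"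
    by (rule subst_superset) (auto dest: subsetD[OF keys_add])
  also have "\<dots> = (\<Sum>mo\<in>?A. CC (Poly_Mapping.lookup p mo) * EE f mo) + (\<Sum>mo\<in>?A. CC (Poly_Mapping.lookup q mo) * EE f mo)"
    by (simp add: lookup_add single_add distrib_right sum.distrib)
  also have "\<dots> = subst f p + subst f q"
    by (simp add: subst_superset[symmetric])
  finally show ?thesis .
qed

lemma subst_zero [simp]: "subst f 0 = 0"
  by (simp add: subst_def)

lemma subst_single: "subst f (Poly_Mapping.single m c) = CC c * EE f m"
  by (cases "c = 0") (simp_all add: subst_EE)

lemma subst_sum: "subst f (sum g A) = (\<Sum>x\<in>A. subst f (g x))"
  by (induction A rule: infinite_finite_induct) (simp_all add: subst_add)

lemma poly_expand: "p = (\<Sum>m\<in>Poly_Mapping.keys p. Poly_Mapping.single m (Poly_Mapping.lookup p m))"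
  by (rule poly_mapping_eqI) (simp add: lookup_sum lookup_single when_def in_keys_iff)

lemma subst_mult: "subst f (p * q) = subst f p * subst f q"
proof -
  have "p * q = (\<Sum>a\<in>Poly_Mapping.keys p. \<Sum>b\<in>Poly_Mapping.keys q.
      Poly_Mapping.single a (Poly_Mapping.lookup p a) * Poly_Mapping.single b (Poly_Mapping.lookup q b))"
    by (subst poly_expand[of p], subst poly_expand[of q]) (simp add: sum_product)
  then have "subst f (p * q) = (\<Sum>a\<in>Poly_Mapping.keys p. \<Sum>b\<in>Poly_Mapping.keys q.
      CC (Poly_Mapping.lookup p a) * EE f a * (CC (Poly_Mapping.lookup q b) * EE f b))"
    by (simp add: subst_sum mult_single subst_single EE_add mult_ac)
  also have "\<dots> = subst f p * subst f q"
    by (simp add: subst_EE sum_product)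
  finally show ?thesis .
qed

lemma subst_const [simp]: "subst f (CC c) = CC c"
  by (simp add: subst_single)

lemma subst_Var [simp]: "subst f (Var x) = f x"
  by (simp add: Var_def subst_single)

lemma subst_uminus: "subst f (- p) = - subst f p"
  by (metis add.right_inverse minus_unique subst_add subst_zero)

lemma subst_diff: "subst f (p - q) = subst f p - subst f q"
  using subst_add[of f p "-q"] by (simp add: subst_uminus)

lemma subst_one [simp]: "subst f 1 = 1"
  using subst_const[of f 1] by simp

lemma single_add_one: "Poly_Mapping.single (k + l) (1::'k::comm_ring_1) = Poly_Mapping.single k 1 * Poly_Mapping.single l 1"
  by (simp add: mult_single)

lemma single_sum_one:
  "Poly_Mapping.single (sum g A) (1::'k::comm_ring_1) = (\<Prod>x\<in>A. Poly_Mapping.single (g x) 1)"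
  by (induction A rule: infinite_finite_induct) (simp_all add: single_add_one)

lemma single_pow_Var:
  "Poly_Mapping.single (Poly_Mapping.single x n) (1::'k::comm_ring_1) = Var x ^ n"
proof (induction n)
  case 0 then show ?case by simp
next
  case (Suc n)
  have "Poly_Mapping.single x (Suc n) = Poly_Mapping.single x 1 + Poly_Mapping.single x n"
    by (simp add: single_add[symmetric])
  then show ?case using Suc by (simp add: Var_def single_add_one)
qed

lemma mono_expand: "m = (\<Sum>x\<in>Poly_Mapping.keys m. Poly_Mapping.single x (Poly_Mapping.lookup m x))"
  by (rule poly_mapping_eqI) (simp add: lookup_sum lookup_single when_def in_keys_iff)

lemma poly_induct [case_names add mult const var]:
  fixes P :: "('v, 'k::comm_ring_1) mpoly \<Rightarrow> bool"
  assumes add: "\<And>p q. P p \<Longrightarrow> P q \<Longrightarrow> P (p + q)"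
    and mult: "\<And>p q. P p \<Longrightarrow> P q \<Longrightarrow> P (p * q)"
    and const: "\<And>c. P (CC c)"
    and var: "\<And>x. P (Var x)"
  shows "P p"
proof -
  have P0: "P 0" using const[of 0] by simp
  have P1: "P 1" using const[of 1] by simp
  have Psum: "P (sum g A)" if "\<And>x. P (g x)" for g :: "'a \<Rightarrow> ('v, 'k) mpoly" and A
    using that by (induction A rule: infinite_finite_induct) (simp_all add: P0 add)
  have Pprod: "P (prod g A)" if "\<And>x. P (g x)" for g :: "'a \<Rightarrow> ('v, 'k) mpoly" and A
    using that by (induction A rule: infinite_finite_induct) (simp_all add: P1 mult)
  have Ppow: "P (q ^ n)" if "P q" for q n
    using that by (induction n) (simp_all add: P1 mult)
  have Pmono: "P (Poly_Mapping.single m 1)" for m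
  proof -
    have "Poly_Mapping.single m (1::'k) = (\<Prod>x\<in>Poly_Mapping.keys m. Var x ^ Poly_Mapping.lookup m x)"
      by (subst mono_expand) (simp add: single_sum_one single_pow_Var)
    then show ?thesis by (simp add: Pprod Ppow var)
  qed
  have Psingle: "P (Poly_Mapping.single m c)" for m c
  proof -
    have "Poly_Mapping.single m c = CC c * Poly_Mapping.single m 1" by (simp add: mult_single)
    then show ?thesis using mult[OF const Pmono] by simp
  qed
  show ?thesis by (subst poly_expand) (rule Psum, rule Psingle)
qed

definition is_hom :: "(('v, 'k::comm_ring_1) mpoly \<Rightarrow> ('w, 'k) mpoly) \<Rightarrow> bool" where
  "is_hom F \<longleftrightarrow> (\<forall>a b. F (a + b) = F a + F b \<and> F (a * b) = F a * F b) \<and> (\<forall>c. F (CC c) = CC c)"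

lemma is_hom_subst: "is_hom (subst f)"
  by (simp add: is_hom_def subst_add subst_mult)

lemma hom_eq:
  assumes "is_hom F" "is_hom G" "\<And>x. F (Var x) = G (Var x)"
  shows "F p = G p"
  by (rule poly_induct[where P = "\<lambda>p. F p = G p"]) (use assms in \<open>simp_all add: is_hom_def\<close>)

lemma is_hom_comp: "is_hom F \<Longrightarrow> is_hom G \<Longrightarrow> is_hom (\<lambda>p. F (G p))"
  by (simp add: is_hom_def)

lemma subst_subst: "subst f (subst g p) = subst (\<lambda>x. subst f (g x)) p"
  by (rule hom_eq[where F = "\<lambda>p. subst f (subst g p)"])
     (simp_all add: is_hom_comp is_hom_subst)

definition sc :: "'k::field \<Rightarrow> ('i \<Rightarrow> 'k) \<Rightarrow> ('i \<Rightarrow> 'k)" where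
  "sc c f = (\<lambda>x. c * f x)"

definition dl :: "'i \<Rightarrow> 'i \<Rightarrow> 'k::field" where
  "dl i = (\<lambda>j. if j = i then 1 else 0)"

lemma fsum_apply: "(sum f A) x = (\<Sum>v\<in>A. f v x)"
  by (induction A rule: infinite_finite_induct) (simp_all add: plus_fun_def zero_fun_def)

lemma vs: "vector_space (sc :: 'k::field \<Rightarrow> ('i \<Rightarrow> 'k) \<Rightarrow> _)"
  by (rule vector_space.intro) (simp_all add: sc_def fun_eq_iff plus_fun_def distrib_left distrib_right)

lemma fdvs: "finite_dimensional_vector_space (sc :: 'k::field \<Rightarrow> ('i::finite \<Rightarrow> 'k) \<Rightarrow> _) (range dl)"
proof -
  interpret vector_space "sc :: 'k::field \<Rightarrow> ('i::finite \<Rightarrow> 'k) \<Rightarrow> _" by (rule vs)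
  show ?thesis
  proof (rule finite_dimensional_vector_space.intro[OF vs], rule finite_dimensional_vector_space_axioms.intro)
    show "finite (range (dl :: 'i \<Rightarrow> 'i \<Rightarrow> 'k))" by simp
    show "\<not> dependent (range (dl :: 'i \<Rightarrow> 'i \<Rightarrow> 'k))"
    proof
      assume "dependent (range (dl :: 'i \<Rightarrow> 'i \<Rightarrow> 'k))"
      then obtain t :: "('i \<Rightarrow> 'k) set" and u where t: "finite t" "t \<subseteq> range dl" "(\<Sum>v\<in>t. sc (u v) v) = 0" "\<exists>v\<in>t. u v \<noteq> 0"
        unfolding dependent_explicit by blast
      then obtain v where v: "v \<in> t" "u v \<noteq> 0" by blast
      obtain i where vi: "v = dl i" using t v by blast
      have "(\<Sum>w\<in>t. sc (u w) w) i = (\<Sum>w\<in>t. u w * w i)"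
        by (simp add: sc_def fsum_apply)
      also have "\<dots> = (\<Sum>w\<in>{v}. u w * w i)"
      proof (rule sum.mono_neutral_right)
        show "\<forall>w\<in>t - {v}. u w * w i = 0"
        proof
          fix w assume w: "w \<in> t - {v}"
          then obtain j where "w = dl j" using t by blast
          with w vi have "j \<noteq> i" by blast
          then show "u w * w i = 0" using \<open>w = dl j\<close> by (simp add: dl_def)
        qed
      qed (use t v in simp_all)
      also have "\<dots> = u v" by (simp add: vi dl_def)
      finally show False using t v by (simp add: zero_fun_def)
    qed
    show "span (range (dl :: 'i \<Rightarrow> 'i \<Rightarrow> 'k)) = UNIV"
    proof (rule set_eqI, rule iffI)
      fix f :: "'i \<Rightarrow> 'k"
      have "f = (\<Sum>i\<in>UNIV. sc (f i) (dl i))"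
      proof (rule ext)
        fix x
        have "(\<Sum>i\<in>UNIV. sc (f i) (dl i)) x = (\<Sum>v\<in>UNIV. if x = v then f v else 0)"
          by (simp add: fsum_apply sc_def dl_def if_distrib cong: if_cong)
        then show "f x = (\<Sum>i\<in>UNIV. sc (f i) (dl i)) x" by simp
      qed
      also have "\<dots> \<in> span (range dl)"
        by (intro span_sum span_scale span_base) auto
      finally show "f \<in> span (range dl)" .
    qed simp
  qed
qed

lemma inj_imp_surj_fun:
  fixes K :: "('i::finite \<Rightarrow> 'k::field) \<Rightarrow> ('i \<Rightarrow> 'k)"
  assumes add: "\<And>a b. K (\<lambda>x. a x + b x) = (\<lambda>x. K a x + K b x)"
    and scl: "\<And>c a. K (\<lambda>x. c * a x) = (\<lambda>x. c * K a x)"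
    and inj: "inj K"
  shows "surj K"
proof -
  interpret finite_dimensional_vector_space "sc :: 'k::field \<Rightarrow> ('i::finite \<Rightarrow> 'k) \<Rightarrow> _" "range dl"
    by (rule fdvs)
  have "Vector_Spaces.linear (sc :: 'k::field \<Rightarrow> ('i::finite \<Rightarrow> 'k) \<Rightarrow> _) sc K"
    unfolding Vector_Spaces.linear_iff using vs add scl by (simp add: sc_def plus_fun_def)
  then show ?thesis using linear_inj_imp_surj inj by blast
qed

lemma sum_UNIV_Plus:
  "(\<Sum>v\<in>(UNIV :: ('r::finite + 's::finite) set). g v) = (\<Sum>r\<in>UNIV. g (Inl r)) + (\<Sum>s\<in>UNIV. g (Inr s))"
  by (subst UNIV_Plus_UNIV[symmetric]) (simp only: sum.Plus[OF finite finite] comp_def)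

lemma fiber_sum:
  fixes \<pi> :: "'i::finite \<Rightarrow> 'r::finite"
  shows "(\<Sum>r\<in>UNIV. \<Sum>i\<in>{i. \<pi> i = r}. g r i) = (\<Sum>i\<in>UNIV. g (\<pi> i) i)"
proof -
  have "(\<Sum>r\<in>UNIV. \<Sum>i\<in>{i. \<pi> i = r}. g r i) = (\<Sum>r\<in>UNIV. \<Sum>i\<in>UNIV. if \<pi> i = r then g r i else 0)"
  proof (rule sum.cong[OF refl])
    fix r
    have "{i. \<pi> i = r} = {i \<in> UNIV. \<pi> i = r}" by simp
    then show "(\<Sum>i\<in>{i. \<pi> i = r}. g r i) = (\<Sum>i\<in>UNIV. if \<pi> i = r then g r i else 0)"
      by (simp only: sum.inter_filter[OF finite])
  qed
  also have "\<dots> = (\<Sum>i\<in>UNIV. \<Sum>r\<in>UNIV. if \<pi> i = r then g r i else 0)"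
    by (rule sum.swap)
  also have "\<dots> = (\<Sum>i\<in>UNIV. g (\<pi> i) i)"
    by simp
  finally show ?thesis .
qed

lemma CC_sum: "CC (sum g A) = (\<Sum>x\<in>A. CC (g x))"
  by (induction A rule: infinite_finite_induct) (simp_all add: single_add)

lemma CC_mult: "CC (a * b) = CC a * CC b"
  by (simp add: mult_single)

definition fT :: "('i::finite \<Rightarrow> 'r) \<Rightarrow> ('i \<Rightarrow> 's) \<Rightarrow> 'r + 's \<Rightarrow> ('i, 'k::comm_ring_1) mpoly" where
  "fT \<pi>R \<pi>S = case_sum (\<lambda>r. \<Sum>i\<in>{i. \<pi>R i = r}. Var i) (\<lambda>s. \<Sum>i\<in>{i. \<pi>S i = s}. Var i)"

lemma tm_eq: "tensor_map \<pi>R \<pi>S = subst (fT \<pi>R \<pi>S)"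
  by (simp add: tensor_map_def fT_def)

definition LL :: "('i \<Rightarrow> 'r) \<Rightarrow> ('i \<Rightarrow> 's) \<Rightarrow> ('r + 's \<Rightarrow> 'k::comm_ring_1) \<Rightarrow> 'i \<Rightarrow> 'k" where
  "LL \<pi>R \<pi>S a i = a (Inl (\<pi>R i)) + a (Inr (\<pi>S i))"

definition eps :: "'r + 's \<Rightarrow> 'k::comm_ring_1" where
  "eps = case_sum (\<lambda>_. 1) (\<lambda>_. -1)"

definition lin :: "('v::finite \<Rightarrow> 'k::comm_ring_1) \<Rightarrow> ('v, 'k) mpoly" where
  "lin a = (\<Sum>v\<in>UNIV. CC (a v) * Var v)"

lemma T_lin:
  fixes \<pi>R :: "'i::finite \<Rightarrow> 'r::finite" and \<pi>S :: "'i \<Rightarrow> 's::finite"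
    and a :: "'r + 's \<Rightarrow> 'k::comm_ring_1"
  shows "tensor_map \<pi>R \<pi>S (lin a) = lin (LL \<pi>R \<pi>S a)"
proof -
  have "tensor_map \<pi>R \<pi>S (lin a) = (\<Sum>v\<in>UNIV. CC (a v) * fT \<pi>R \<pi>S v)"
    by (simp add: tm_eq lin_def subst_sum subst_mult)
  also have "\<dots> = (\<Sum>r\<in>UNIV. \<Sum>i\<in>{i. \<pi>R i = r}. CC (a (Inl r)) * Var i)
       + (\<Sum>s\<in>UNIV. \<Sum>i\<in>{i. \<pi>S i = s}. CC (a (Inr s)) * Var i)"
    by (simp add: sum_UNIV_Plus fT_def sum_distrib_left)
  also have "\<dots> = (\<Sum>i\<in>UNIV. CC (a (Inl (\<pi>R i))) * Var i) + (\<Sum>i\<in>UNIV. CC (a (Inr (\<pi>S i))) * Var i)"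
    by (simp only: fiber_sum)
  also have "\<dots> = lin (LL \<pi>R \<pi>S a)"
    by (simp add: lin_def LL_def single_add distrib_right sum.distrib)
  finally show ?thesis .
qed

lemma lin_eps: "lin (eps :: 'r::finite + 's::finite \<Rightarrow> 'k::comm_ring_1) = tensor_rel"
  by (simp add: lin_def eps_def tensor_rel_def sum_UNIV_Plus single_uminus sum_negf)

lemma lin_delta: "lin (\<lambda>w. if w = v then 1 else 0) = (Var v :: ('v::finite, 'k::comm_ring_1) mpoly)"
proof -
  have "lin (\<lambda>w. if w = v then 1 else 0) = (\<Sum>w\<in>UNIV. if w = v then (Var w :: ('v, 'k) mpoly) else 0)"
    unfolding lin_def by (rule sum.cong) auto
  then show ?thesis by simp
qed

lemma lin_sum: "(\<Sum>i\<in>F. lin (g i)) = lin (\<lambda>w. \<Sum>i\<in>F. g i w)"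
  by (simp add: lin_def CC_sum sum_distrib_right) (rule sum.swap)

lemma lin_diff: "lin a - lin b = lin (\<lambda>w. a w - b w)"
  by (simp add: lin_def single_diff left_diff_distrib sum_subtractf)

lemma lin_scale: "lin (\<lambda>w. c * a w) = CC c * lin a"
  by (simp add: lin_def sum_distrib_left CC_mult mult.assoc)

lemma T_rel: "tensor_map \<pi>R \<pi>S (tensor_rel :: ('r::finite + 's::finite, 'k::comm_ring_1) mpoly) = 0"
proof -
  have "LL \<pi>R \<pi>S (eps :: 'r + 's \<Rightarrow> 'k) = (\<lambda>_. 0)"
    by (simp add: LL_def eps_def fun_eq_iff)
  then have "lin (LL \<pi>R \<pi>S (eps :: 'r + 's \<Rightarrow> 'k)) = 0" by (simp add: lin_def)
  then show ?thesis using T_lin[of \<pi>R \<pi>S "eps :: 'r + 's \<Rightarrow> 'k"] by (simp only: lin_eps)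
qed

context
  fixes \<pi>R :: "'i::finite \<Rightarrow> 'r::finite" and \<pi>S :: "'i \<Rightarrow> 's::finite"
  assumes comp: "complementary \<pi>R \<pi>S"
begin

lemma conn: "(bip_adj \<pi>R \<pi>S)\<^sup>*\<^sup>* x y"
  using comp unfolding complementary_def bip_is_tree_def by blast

lemma card_eq: "CARD('r + 's) = CARD('i) + 1"
  using comp unfolding complementary_def bip_is_tree_def by (elim conjE) (rule sym, assumption)

lemma ker_LL:
  fixes a :: "'r + 's \<Rightarrow> 'k::field"
  assumes "\<And>i. LL \<pi>R \<pi>S a i = 0"
  shows "a = (\<lambda>v. a (Inl undefined) * eps v)"
proof -
  have inv: "a x * eps x = a y * eps y" if "(bip_adj \<pi>R \<pi>S)\<^sup>*\<^sup>* x y" for x y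
    using that
  proof (induction rule: rtranclp_induct)
    case base then show ?case by simp
  next
    case (step y z)
    from step.hyps(2) obtain i where
      yz: "(y = Inr (\<pi>S i) \<and> z = Inl (\<pi>R i)) \<or> (y = Inl (\<pi>R i) \<and> z = Inr (\<pi>S i))"
      unfolding bip_adj_def by blast
    have "a (Inl (\<pi>R i)) = - a (Inr (\<pi>S i))"
      using assms[of i] by (simp add: LL_def eq_neg_iff_add_eq_0)
    with yz have "a y * eps y = a z * eps z" by (auto simp: eps_def)
    with step.IH show ?case by simp
  qed
  show ?thesis
  proof
    fix v
    have e: "a v * eps v = a (Inl undefined) * eps (Inl undefined :: 'r + 's)" by (rule inv) (rule conn)
    have ee: "eps v * eps v = (1::'k)" by (cases v) (simp_all add: eps_def)
    have "a v = a v * eps v * eps v" by (simp add: ee mult.assoc)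
    also have "\<dots> = a (Inl undefined) * eps v" using e by (simp add: eps_def)
    finally show "a v = a (Inl undefined) * eps v" .
  qed
qed

lemma exists_g: "\<exists>g :: 'i \<Rightarrow> 'r + 's \<Rightarrow> 'k::field. \<forall>i j. LL \<pi>R \<pi>S (g i) j = (if j = i then 1 else 0)"
proof -
  let ?v0 = "Inl undefined :: 'r + 's"
  have "card (UNIV - {?v0}) = card (UNIV :: 'i set)"
    using card_eq by (simp add: card_Diff_singleton)
  then obtain hinv where h: "bij_betw hinv (UNIV - {?v0}) (UNIV :: 'i set)"
    using finite_same_card_bij[of "UNIV - {?v0}" "UNIV :: 'i set"] by auto
  define ext :: "('i \<Rightarrow> 'k) \<Rightarrow> 'r + 's \<Rightarrow> 'k" where "ext b v = (if v = ?v0 then 0 else b (hinv v))" for b v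
  define K where "K b = LL \<pi>R \<pi>S (ext b)" for b
  have add: "K (\<lambda>x. a x + b x) = (\<lambda>x. K a x + K b x)" for a b
    by (simp add: K_def LL_def ext_def fun_eq_iff)
  have scl: "K (\<lambda>x. c * a x) = (\<lambda>x. c * K a x)" for c a
    by (simp add: K_def LL_def ext_def fun_eq_iff distrib_left)
  have inj: "inj K"
  proof (rule injI)
    fix b1 b2 assume eq: "K b1 = K b2"
    define d where "d x = b1 x - b2 x" for x
    have "LL \<pi>R \<pi>S (ext d) i = 0" for i
      using fun_cong[OF eq, of i] by (auto simp add: K_def LL_def ext_def d_def algebra_simps split: if_splits)
    then have e: "ext d = (\<lambda>v. ext d ?v0 * eps v)" by (rule ker_LL)
    have "ext d ?v0 = 0" by (simp add: ext_def)
    with e have z: "ext d v = 0" for v by (metis mult_zero_left)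
    show "b1 = b2"
    proof
      fix i
      have "i \<in> hinv ` (UNIV - {?v0})" using h by (simp add: bij_betw_def)
      then obtain v where v: "v \<noteq> ?v0" "hinv v = i" by blast
      then have "d i = ext d v" by (simp add: ext_def)
      then show "b1 i = b2 i" using z[of v] by (simp add: d_def)
    qed
  qed
  have "surj K" by (rule inj_imp_surj_fun[OF add scl inj])
  then have "\<forall>i. \<exists>b. K b = dl i" by (metis surjD)
  then obtain B where B: "\<And>i. K (B i) = dl i" by metis
  show ?thesis
    by (rule exI[of _ "\<lambda>i. ext (B i)"]) (simp add: B[unfolded K_def] dl_def)
qed

end

lemma is_hom_id: "is_hom (\<lambda>p. p)"
  by (simp add: is_hom_def)

context
  fixes \<pi>R :: "'i::finite \<Rightarrow> 'r::finite" and \<pi>S :: "'i \<Rightarrow> 's::finite"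
  assumes comp: "complementary \<pi>R \<pi>S"
begin

lemma kernel_surj:
  shows "{a :: ('r + 's, 'k::field) mpoly. tensor_map \<pi>R \<pi>S a = 0} = range (\<lambda>c. c * tensor_rel)
    \<and> surj (tensor_map \<pi>R \<pi>S :: ('r + 's, 'k) mpoly \<Rightarrow> ('i, 'k) mpoly)"
proof -
  obtain g :: "'i \<Rightarrow> 'r + 's \<Rightarrow> 'k" where g: "\<And>i j. LL \<pi>R \<pi>S (g i) j = (if j = i then 1 else 0)"
    using exists_g[OF comp] by blast
  define G :: "('i, 'k) mpoly \<Rightarrow> ('r + 's, 'k) mpoly" where "G = subst (\<lambda>i. lin (g i))"
  define T :: "('r + 's, 'k) mpoly \<Rightarrow> ('i, 'k) mpoly" where "T = tensor_map \<pi>R \<pi>S"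
  define M :: "('r + 's, 'k) mpoly set" where "M = range (\<lambda>c. c * tensor_rel)"
  have homT: "is_hom T" by (simp add: T_def tm_eq is_hom_subst)
  have homG: "is_hom G" by (simp add: G_def is_hom_subst)
  have TG: "T (G p) = p" for p
  proof (rule hom_eq[where F = "\<lambda>p. T (G p)" and G = "\<lambda>p. p"])
    show "is_hom (\<lambda>p. T (G p))" by (rule is_hom_comp[OF homT homG])
    show "is_hom (\<lambda>p. p)" by (rule is_hom_id)
    fix i
    have "T (G (Var i)) = lin (LL \<pi>R \<pi>S (g i))" by (simp add: G_def T_def T_lin)
    also have "\<dots> = lin (\<lambda>j. if j = i then 1 else 0)" by (rule arg_cong[where f=lin], rule ext, rule g)
    also have "\<dots> = Var i" by (rule lin_delta)
    finally show "T (G (Var i)) = Var i" .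
  qed
  have Madd: "x \<in> M \<Longrightarrow> y \<in> M \<Longrightarrow> x + y \<in> M" for x y
    by (auto simp: M_def distrib_right[symmetric])
  have Mmul: "y \<in> M \<Longrightarrow> x * y \<in> M" for x y
    by (auto simp: M_def mult.assoc[symmetric])
  have varM: "Var v - G (T (Var v)) \<in> M" for v
  proof -
    define F where "F = {i. Inl (\<pi>R i) = v \<or> Inr (\<pi>S i) = v}"
    have fTv: "fT \<pi>R \<pi>S v = (\<Sum>i\<in>F. Var i)"
      by (cases v) (simp_all add: fT_def F_def)
    have "G (T (Var v)) = (\<Sum>i\<in>F. lin (g i))"
      by (simp add: G_def T_def tm_eq fTv subst_sum)
    also have "\<dots> = lin (\<lambda>w. \<Sum>i\<in>F. g i w)" by (rule lin_sum)
    finally have "Var v - G (T (Var v)) = lin (\<lambda>w. if w = v then 1 else 0) - lin (\<lambda>w. \<Sum>i\<in>F. g i w)"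
      by (simp add: lin_delta)
    also have "\<dots> = lin (\<lambda>w. (if w = v then 1 else 0) - (\<Sum>i\<in>F. g i w))" by (rule lin_diff)
    finally have eq: "Var v - G (T (Var v)) = lin (\<lambda>w. (if w = v then 1 else 0) - (\<Sum>i\<in>F. g i w))" .
    define d where "d = (\<lambda>w. (if w = v then 1 else 0) - (\<Sum>i\<in>F. g i w))"
    have "LL \<pi>R \<pi>S d j = 0" for j
    proof -
      have "LL \<pi>R \<pi>S d j = ((if Inl (\<pi>R j) = v then 1 else 0) + (if Inr (\<pi>S j) = v then 1 else 0))
          - (\<Sum>i\<in>F. LL \<pi>R \<pi>S (g i) j)"
        by (simp add: d_def LL_def sum.distrib algebra_simps)
      also have "(\<Sum>i\<in>F. LL \<pi>R \<pi>S (g i) j) = (\<Sum>i\<in>F. if j = i then 1 else 0)"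
        by (simp add: g)
      also have "\<dots> = (if j \<in> F then 1 else 0)"
        by (simp add: sum.delta)
      also have "(if Inl (\<pi>R j) = v then 1 else 0) + (if Inr (\<pi>S j) = v then 1 else 0) = (if j \<in> F then (1::'k) else 0)"
        by (cases v) (auto simp: F_def)
      finally show ?thesis by simp
    qed
    then have "d = (\<lambda>w. d (Inl undefined) * eps w)" by (rule ker_LL[OF comp])
    then have "lin d = CC (d (Inl undefined)) * lin eps" by (metis lin_scale)
    then have "lin d = CC (d (Inl undefined)) * tensor_rel" by (simp add: lin_eps)
    then show ?thesis unfolding eq d_def[symmetric] M_def by blast
  qed
  have main: "a - G (T a) \<in> M" for a
  proof (induction a rule: poly_induct)
    case (add p q)
    have "p + q - G (T (p + q)) = (p - G (T p)) + (q - G (T q))"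
      using homT homG by (simp add: is_hom_def)
    then show ?case using Madd[OF add(1) add(2)] by (simp only:)
  next
    case (mult p q)
    have h: "G (T (p * q)) = G (T p) * G (T q)"
      using homT homG by (simp add: is_hom_def)
    have "p * q - G (T p) * G (T q) = q * (p - G (T p)) + G (T p) * (q - G (T q))"
      by (simp add: algebra_simps)
    then have "p * q - G (T (p * q)) = q * (p - G (T p)) + G (T p) * (q - G (T q))"
      by (simp only: h)
    then show ?case using Madd[OF Mmul[OF mult(1)] Mmul[OF mult(2)]] by (simp only:)
  next
    case (const c)
    have "CC c - G (T (CC c)) = 0 * tensor_rel"
      using homT homG by (simp add: is_hom_def)
    then show ?case unfolding M_def by (rule image_eqI) simp
  next
    case (var x)
    then show ?case by (rule varM)
  qed
  have G0: "G 0 = 0" by (simp add: G_def)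
  have "{a. T a = 0} = M"
  proof
    show "{a. T a = 0} \<subseteq> M"
    proof
      fix a assume "a \<in> {a. T a = 0}"
      then have "T a = 0" by simp
      then show "a \<in> M" using main[of a] G0 by simp
    qed
    show "M \<subseteq> {a. T a = 0}"
    proof
      fix a assume "a \<in> M"
      then obtain c where c: "a = c * tensor_rel" unfolding M_def by blast
      have "T a = T c * T tensor_rel" using homT unfolding c is_hom_def by blast
      also have "T tensor_rel = 0" unfolding T_def by (rule T_rel)
      finally show "a \<in> {a. T a = 0}" by simp
    qed
  qed
  moreover have "surj T" by (metis TG surjI)
  ultimately show ?thesis by (simp add: T_def M_def)
qed

end

lemma T_rename_Inl: "tensor_map \<pi>R \<pi>S (rename Inl p) = phi \<pi>R p"
  by (simp add: tm_eq rename_def phi_def subst_subst fT_def)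

lemma T_rename_Inr: "tensor_map \<pi>R \<pi>S (rename Inr p) = phi \<pi>S p"
  by (simp add: tm_eq rename_def phi_def subst_subst fT_def)

lemma T_phi: "tensor_map \<pi>R \<pi>S (rename Inl p * rename Inr q) = phi \<pi>R p * phi \<pi>S q"
  by (simp add: tm_eq subst_mult T_rename_Inl[unfolded tm_eq] T_rename_Inr[unfolded tm_eq])

lemma factor:
  fixes \<pi> :: "'i \<Rightarrow> 'r" and \<pi>' :: "'i \<Rightarrow> 'r2"
  assumes "surj \<pi>" "surj \<pi>'" "\<forall>i j. \<pi>' i = \<pi>' j \<longleftrightarrow> \<pi> i = \<pi> j"
  shows "\<exists>\<sigma>. bij \<sigma> \<and> \<pi>' = \<sigma> \<circ> \<pi>"
proof -
  define \<sigma> where "\<sigma> r = \<pi>' (SOME i. \<pi> i = r)" for r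
  have s: "\<sigma> (\<pi> i) = \<pi>' i" for i
  proof -
    have "\<pi> (SOME j. \<pi> j = \<pi> i) = \<pi> i" by (rule someI) (rule refl)
    then show ?thesis using assms(3) by (simp add: \<sigma>_def)
  qed
  have "inj \<sigma>"
  proof (rule injI)
    fix a b assume ab: "\<sigma> a = \<sigma> b"
    obtain ia where "a = \<pi> ia" using assms(1) by (metis surjD)
    moreover obtain ib where "b = \<pi> ib" using assms(1) by (metis surjD)
    ultimately show "a = b" using ab s assms(3) by metis
  qed
  moreover have "surj \<sigma>"
  proof (rule surjI)
    fix y
    obtain i where "y = \<pi>' i" using assms(2) by (metis surjD)
    then show "\<sigma> (\<pi> (SOME i. \<pi>' i = y)) = y"
      by (metis (mono_tags, lifting) s someI)
  qed
  ultimately have "bij \<sigma>" by (simp add: bij_def)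
  moreover have "\<pi>' = \<sigma> \<circ> \<pi>" by (simp add: fun_eq_iff s)
  ultimately show ?thesis by blast
qed

lemma rename_rel:
  fixes \<sigma> :: "'r::finite \<Rightarrow> 'r2::finite" and \<tau> :: "'s::finite \<Rightarrow> 's2::finite"
  assumes "bij \<sigma>" "bij \<tau>"
  shows "rename (map_sum \<sigma> \<tau>) (tensor_rel :: ('r + 's, 'k::comm_ring_1) mpoly) = tensor_rel"
proof -
  have "rename (map_sum \<sigma> \<tau>) (tensor_rel :: ('r + 's, 'k) mpoly)
      = (\<Sum>r\<in>UNIV. Var (Inl (\<sigma> r))) - (\<Sum>s\<in>UNIV. Var (Inr (\<tau> s)))"
    by (simp add: rename_def tensor_rel_def subst_diff subst_sum)
  also have "(\<Sum>r\<in>UNIV. Var (Inl (\<sigma> r)) :: ('r2 + 's2, 'k) mpoly) = (\<Sum>r\<in>UNIV. Var (Inl r))"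
    by (rule sum.reindex_bij_betw) (use assms(1) in \<open>simp add: bij_def\<close>)
  also have "(\<Sum>s\<in>UNIV. Var (Inr (\<tau> s)) :: ('r2 + 's2, 'k) mpoly) = (\<Sum>s\<in>UNIV. Var (Inr s))"
    by (rule sum.reindex_bij_betw) (use assms(2) in \<open>simp add: bij_def\<close>)
  finally show ?thesis by (simp add: tensor_rel_def)
qed

lemma T_rename:
  fixes \<pi>R :: "'i::finite \<Rightarrow> 'r" and \<pi>S :: "'i \<Rightarrow> 's"
    and \<sigma> :: "'r \<Rightarrow> 'r2" and \<tau> :: "'s \<Rightarrow> 's2"
  assumes "inj \<sigma>" "inj \<tau>" "\<pi>R' = \<sigma> \<circ> \<pi>R" "\<pi>S' = \<tau> \<circ> \<pi>S"
  shows "tensor_map \<pi>R' \<pi>S' (rename (map_sum \<sigma> \<tau>) a) = (tensor_map \<pi>R \<pi>S a :: ('i, 'k::comm_ring_1) mpoly)"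
proof -
  have "(\<lambda>x. fT \<pi>R' \<pi>S' (map_sum \<sigma> \<tau> x) :: ('i, 'k) mpoly) = fT \<pi>R \<pi>S"
  proof
    fix x show "(fT \<pi>R' \<pi>S' (map_sum \<sigma> \<tau> x) :: ('i, 'k) mpoly) = fT \<pi>R \<pi>S x"
    proof (cases x)
      case (Inl r)
      have "{i. \<pi>R' i = \<sigma> r} = {i. \<pi>R i = r}" using assms(1,3) by (auto simp: inj_eq)
      then show ?thesis by (simp add: Inl fT_def)
    next
      case (Inr s)
      have "{i. \<pi>S' i = \<tau> s} = {i. \<pi>S i = s}" using assms(2,4) by (auto simp: inj_eq)
      then show ?thesis by (simp add: Inr fT_def)
    qed
  qed
  then show ?thesis by (simp add: tm_eq rename_def subst_subst)
qed

theorem lemma8p1: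
  fixes \<pi>R :: "'i::finite \<Rightarrow> 'r::finite" and \<pi>S :: "'i \<Rightarrow> 's::finite"
    and \<pi>R' :: "'i \<Rightarrow> 'r2::finite" and \<pi>S' :: "'i \<Rightarrow> 's2::finite"
  assumes "surj \<pi>R" and "surj \<pi>S" and "complementary \<pi>R \<pi>S"
    and "surj \<pi>R'" and "surj \<pi>S'"
    and "\<forall>i j. \<pi>R' i = \<pi>R' j \<longleftrightarrow> \<pi>R i = \<pi>R j"
    and "\<forall>i j. \<pi>S' i = \<pi>S' j \<longleftrightarrow> \<pi>S i = \<pi>S j"
  shows "(\<forall>p q. tensor_map \<pi>R \<pi>S (rename Inl p * rename Inr q) = phi \<pi>R p * phi \<pi>S (q :: ('s, 'k::field) mpoly))
    \<and> (\<forall>a b :: ('r + 's, 'k) mpoly. tensor_map \<pi>R \<pi>S (a + b) = tensor_map \<pi>R \<pi>S a + tensor_map \<pi>R \<pi>S b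
          \<and> tensor_map \<pi>R \<pi>S (a * b) = tensor_map \<pi>R \<pi>S a * tensor_map \<pi>R \<pi>S b)
    \<and> tensor_map \<pi>R \<pi>S (tensor_rel :: ('r + 's, 'k) mpoly) = 0
    \<and> {a :: ('r + 's, 'k) mpoly. tensor_map \<pi>R \<pi>S a = 0} = range (\<lambda>c. c * tensor_rel)
    \<and> surj (tensor_map \<pi>R \<pi>S :: ('r + 's, 'k) mpoly \<Rightarrow> ('i, 'k) mpoly)
    \<and> (\<exists>\<sigma> \<tau>. bij \<sigma> \<and> bij \<tau> \<and> \<pi>R' = \<sigma> \<circ> \<pi>R \<and> \<pi>S' = \<tau> \<circ> \<pi>S
          \<and> rename (map_sum \<sigma> \<tau>) (tensor_rel :: ('r + 's, 'k) mpoly) = tensor_rel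
          \<and> (\<forall>a :: ('r + 's, 'k) mpoly. tensor_map \<pi>R' \<pi>S' (rename (map_sum \<sigma> \<tau>) a) = tensor_map \<pi>R \<pi>S a))"
proof -
  have A: "\<forall>p q. tensor_map \<pi>R \<pi>S (rename Inl p * rename Inr q) = phi \<pi>R p * phi \<pi>S (q :: ('s, 'k::field) mpoly)"
    by (simp add: T_phi)
  have B: "\<forall>a b :: ('r + 's, 'k) mpoly. tensor_map \<pi>R \<pi>S (a + b) = tensor_map \<pi>R \<pi>S a + tensor_map \<pi>R \<pi>S b
          \<and> tensor_map \<pi>R \<pi>S (a * b) = tensor_map \<pi>R \<pi>S a * tensor_map \<pi>R \<pi>S b"
    by (simp add: tm_eq subst_add subst_mult)
  have C: "tensor_map \<pi>R \<pi>S (tensor_rel :: ('r + 's, 'k) mpoly) = 0" by (rule T_rel)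
  have D: "{a :: ('r + 's, 'k) mpoly. tensor_map \<pi>R \<pi>S a = 0} = range (\<lambda>c. c * tensor_rel)
    \<and> surj (tensor_map \<pi>R \<pi>S :: ('r + 's, 'k) mpoly \<Rightarrow> ('i, 'k) mpoly)"
    by (rule kernel_surj[OF assms(3)])
  obtain \<sigma> where \<sigma>: "bij \<sigma>" "\<pi>R' = \<sigma> \<circ> \<pi>R" using factor[OF assms(1,4,6)] by blast
  obtain \<tau> where \<tau>: "bij \<tau>" "\<pi>S' = \<tau> \<circ> \<pi>S" using factor[OF assms(2,5,7)] by blast
  have E: "rename (map_sum \<sigma> \<tau>) (tensor_rel :: ('r + 's, 'k) mpoly) = tensor_rel"
    by (rule rename_rel[OF \<sigma>(1) \<tau>(1)])
  have F: "\<forall>a :: ('r + 's, 'k) mpoly. tensor_map \<pi>R' \<pi>S' (rename (map_sum \<sigma> \<tau>) a) = tensor_map \<pi>R \<pi>S a"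
    using T_rename[OF bij_is_inj[OF \<sigma>(1)] bij_is_inj[OF \<tau>(1)] \<sigma>(2) \<tau>(2)] by blast
  show ?thesis using A B C D E F \<sigma> \<tau> by blast
qed

end
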